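(* Let $g\ge 2$, $q=2g+1$, and let $\tau_g$ and $\tau_g^{\mathrm{CS}}$ be the period matrices of $C_{q,1}$ with respect to the symplectic bases $\{A_i,B_i\}$ and $\{a_i,b_i\}$ respectively. Then $\tau_g$ is invertible and $$\tau_g^{\mathrm{CS}}=-\tau_g^{-1}+I_g.$$
   Context: $C_{q,1}$ is the compact Riemann surface of $y^q=x(1-x)$ (genus $g$); $\zeta=\exp(2\pi\sqrt{-1}/q)$, $\sigma(x,y)=(x,\zeta y)$, $I_0(t)=(t,\sqrt[q]{t(1-t)})$, $c_j$ the class of $I_0\cdot(\sigma^j\circ I_0)^{-1}$. In coordinates $z=4^{1/q}y$, $w=-\sqrt{-1}(2x-1)$ (so $w^2=z^q-1$), $\gamma_k(t)=(\zeta^k 2t,\sqrt{-1}\sqrt{1-(2t)^q})$ for $0\le t\le 1/2$ and $(\zeta^k(2-2t),-\sqrt{-1}\sqrt{1-(2-2t)^q})$ for $1/2\le t\le 1$; $A_i=\gamma_{2i-1}\cdot\gamma_{2i}^{-1}$, $B_i=\gamma_{2i-1}\cdot\gamma_{2i-2}^{-1}\cdots\gamma_1\cdot\gamma_0^{-1}$; $a_i=\sum_{k=1}^{2i-1}(-1)^{k-1}c_k$, $b_i=\sum_{k=1}^{2i-2}(-1)^{k-1}c_k+c_{2i}$. The period matrix w.r.t. a symplectic basis $\{\alpha_i,\beta_i\}$ is $\Omega_\alpha^{-1}\Omega_\beta$ with $\Omega_\alpha=(\int_{\alpha_j}\omega_i)$, $\Omega_\beta=(\int_{\beta_j}\omega_i)$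 for a basis $\omega_1,\dots,\omega_g$ of holomorphic 1-forms. *)

theory Defs
  imports "HOL-Analysis.Analysis" "Jordan_Normal_Form.Gauss_Jordan_Elimination"
begin

text \<open>Points of the affine part of the curve are represented by their coordinates,
as elements of complex x complex. A path is a map real => complex x complex on [0,1].\<close>

definition zeta :: "nat \<Rightarrow> complex" where
  "zeta q = exp (2 * pi * \<i> / of_nat q)"

text \<open>Coordinate change (x,y) |-> (z,w) = (4^(1/q) y, -i(2x-1)), so that w^2 = z^q - 1.\<close>
definition to_zw :: "nat \<Rightarrow> complex \<times> complex \<Rightarrow> complex \<times> complex" where
  "to_zw q p = (of_real (root q 4) * snd p, - \<i> * (2 * fst p - 1))"

definition sigma :: "nat \<Rightarrow> complex \<times> complex \<Rightarrow> complex \<times> complex" where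
  "sigma q p = (fst p, zeta q * snd p)"

definition I0 :: "nat \<Rightarrow> real \<Rightarrow> complex \<times> complex" where
  "I0 q t = (of_real t, of_real (root q (t * (1 - t))))"

text \<open>gamma_k in (z,w) coordinates.\<close>
definition gam :: "nat \<Rightarrow> nat \<Rightarrow> real \<Rightarrow> complex \<times> complex" where
  "gam q k t = (if t \<le> 1/2
     then (zeta q ^ k * of_real (2 * t), \<i> * of_real (sqrt (1 - (2 * t) ^ q)))
     else (zeta q ^ k * of_real (2 - 2 * t), - \<i> * of_real (sqrt (1 - (2 - 2 * t) ^ q))))"

text \<open>Holomorphic differential omega_i = z^i dz / w (i = 0..g-1), a basis of the
holomorphic 1-forms on the compact curve w^2 = z^q - 1, q = 2g+1.
Its integral along a path gamma (given in (z,w) coordinates) is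
integral_0^1 (z^i / w)(gamma t) * (z o gamma)'(t) dt.\<close>
definition omega_int :: "nat \<Rightarrow> (real \<Rightarrow> complex \<times> complex) \<Rightarrow> complex" where
  "omega_int i \<gamma> = integral {0..1}
     (\<lambda>t. (fst (\<gamma> t)) ^ i / snd (\<gamma> t) * vector_derivative (\<lambda>s. fst (\<gamma> s)) (at t within {0..1}))"

text \<open>Integral over a 1-chain: a list of (integer coefficient, path).
Integrals over loop products are sums of integrals over the factors,
with the inverse path contributing with sign -1.\<close>
definition chain_int :: "nat \<Rightarrow> (int \<times> (real \<Rightarrow> complex \<times> complex)) list \<Rightarrow> complex" where
  "chain_int i cs = (\<Sum>(n, \<gamma>) \<leftarrow> cs. of_int n * omega_int i \<gamma>)"

definition cycA :: "nat \<Rightarrow> nat \<Rightarrow> (int \<times> (real \<Rightarrow> complex \<times> complex)) list" where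
  "cycA q i = [(1, gam q (2*i - 1)), (-1, gam q (2*i))]"

text \<open>B_i = gamma_{2i-1} . gamma_{2i-2}^{-1} ... gamma_1 . gamma_0^{-1}\<close>
definition cycB :: "nat \<Rightarrow> nat \<Rightarrow> (int \<times> (real \<Rightarrow> complex \<times> complex)) list" where
  "cycB q i = map (\<lambda>k. ((-1) ^ (2*i - 1 - k), gam q k)) (rev [0..<2*i])"

definition cyc_c :: "nat \<Rightarrow> nat \<Rightarrow> (int \<times> (real \<Rightarrow> complex \<times> complex)) list" where
  "cyc_c q j = [(1, to_zw q \<circ> I0 q), (-1, to_zw q \<circ> (sigma q ^^ j) \<circ> I0 q)]"

text \<open>a_i = sum_{k=1}^{2i-1} (-1)^(k-1) c_k ;  b_i = sum_{k=1}^{2i-2} (-1)^(k-1) c_k + c_{2i}\<close>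
definition cyca :: "nat \<Rightarrow> nat \<Rightarrow> (int \<times> (real \<Rightarrow> complex \<times> complex)) list" where
  "cyca q i = concat (map (\<lambda>k. map (\<lambda>(n, \<gamma>). ((-1) ^ (k - 1) * n, \<gamma>)) (cyc_c q k)) [1..<2*i])"

definition cycb :: "nat \<Rightarrow> nat \<Rightarrow> (int \<times> (real \<Rightarrow> complex \<times> complex)) list" where
  "cycb q i = concat (map (\<lambda>k. map (\<lambda>(n, \<gamma>). ((-1) ^ (k - 1) * n, \<gamma>)) (cyc_c q k)) [1..<2*i - 1])
              @ cyc_c q (2*i)"

text \<open>Matrix of periods (int_{alpha_j} omega_i), i,j = 1..g (0-based indices).\<close>
definition period_mat :: "nat \<Rightarrow> (nat \<Rightarrow> (int \<times> (real \<Rightarrow> complex \<times> complex)) list) \<Rightarrow> complex mat" where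
  "period_mat g \<alpha> = mat g g (\<lambda>(i, j). chain_int i (\<alpha> (j + 1)))"

definition mat_inv :: "complex mat \<Rightarrow> complex mat" where
  "mat_inv A = the (mat_inverse A)"

definition period_matrix :: "nat \<Rightarrow> (nat \<Rightarrow> (int \<times> (real \<Rightarrow> complex \<times> complex)) list)
     \<Rightarrow> (nat \<Rightarrow> (int \<times> (real \<Rightarrow> complex \<times> complex)) list) \<Rightarrow> complex mat" where
  "period_matrix g \<alpha> \<beta> = mat_inv (period_mat g \<alpha>) * period_mat g \<beta>"

end

theory Submission
  imports Defs "Jordan_Normal_Form.Determinant"
begin

definition hh :: "nat \<Rightarrow> nat \<Rightarrow> real \<Rightarrow> real" where
  "hh q i s = s ^ i / sqrt (1 - s ^ q)"

definition FF :: "nat \<Rightarrow> nat \<Rightarrow> real \<Rightarrow> real" where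
  "FF q i x = integral {0..x} (hh q i)"

lemma inv_sqrt_int: "((\<lambda>s. 1 / sqrt (1 - s)) has_integral 2) {0..1::real}"
proof -
  have c: "continuous_on {0..1} (\<lambda>s::real. - 2 * sqrt (1 - s))"
    by (intro continuous_intros)
  have d: "((\<lambda>s. - 2 * sqrt (1 - s)) has_vector_derivative 1 / sqrt (1 - x)) (at x)"
    if x: "x \<in> {0<..<1}" for x :: real
  proof -
    have "((\<lambda>s. - 2 * sqrt (1 - s)) has_real_derivative 1 / sqrt (1 - x)) (at x)"
      using x by (auto intro!: derivative_eq_intros simp: field_simps)
    then show ?thesis
      by (simp add: has_real_derivative_iff_has_vector_derivative)
  qed
  show ?thesis
    using fundamental_theorem_of_calculus_interior[OF _ c d] by simp
qed

lemma hh_cont: "q \<ge> 1 \<Longrightarrow> continuous_on {0..<1} (hh q i)"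
  unfolding hh_def
  by (intro continuous_intros) (auto, metis power_less_one_iff not_one_le_zero le_numeral_extra(4) less_irrefl le_less_trans zero_less_one Suc_le_eq)

lemma hh_bound:
  assumes q: "q \<ge> 1" and x: "x \<in> {0..<1::real}"
  shows "norm (hh q i x) \<le> 1 / sqrt (1 - x)"
proof -
  have "x ^ q \<le> x" using x q by (simp add: power_le_one_iff power_decreasing[of 1 q x, simplified])
  then have s: "sqrt (1 - x) \<le> sqrt (1 - x ^ q)" by simp
  have p: "0 < sqrt (1 - x)" using x by simp
  have "x ^ i \<le> 1" using x by (simp add: power_le_one)
  have "x ^ q \<le> 1" using x by (simp add: power_le_one)
  have "x ^ q < 1" using x q by (simp add: power_less_one_iff)
  then have "norm (hh q i x) = x ^ i / sqrt (1 - x ^ q)" using x by (simp add: hh_def)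
  also have "\<dots> \<le> 1 / sqrt (1 - x ^ q)"
    using \<open>x ^ i \<le> 1\<close> \<open>x ^ q \<le> 1\<close> by (intro divide_right_mono) auto
  also have "\<dots> \<le> 1 / sqrt (1 - x)"
    using s p by (simp add: frac_le)
  finally show ?thesis .
qed

lemma hh_integrable: "q \<ge> 1 \<Longrightarrow> hh q i integrable_on {0..1}"
proof -
  assume q: "q \<ge> 1"
  have "(\<lambda>s. 1 / sqrt (1 - s)) integrable_on {0<..<1::real}"
    using inv_sqrt_int integrable_on_Icc_iff_Ioo by blast
  have "hh q i integrable_on {0<..<1}"
  proof (rule measurable_bounded_by_integrable_imp_integrable)
    show "hh q i \<in> borel_measurable (lebesgue_on {0<..<1})"
      by (rule continuous_imp_measurable_on_sets_lebesgue)
         (auto intro: continuous_on_subset[OF hh_cont[OF q]])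
  qed (use \<open>(\<lambda>s. 1 / sqrt (1 - s)) integrable_on {0<..<1::real}\<close> hh_bound[OF q] in auto)
  then show ?thesis using integrable_on_Icc_iff_Ioo by blast
qed

lemma FF_cont: "q \<ge> 1 \<Longrightarrow> continuous_on {0..1} (FF q i)"
  unfolding FF_def by (rule indefinite_integral_continuous_1[OF hh_integrable])

lemma FF_deriv:
  assumes q: "q \<ge> 1" and x: "0 < x" "x < 1"
  shows "(FF q i has_real_derivative hh q i x) (at x)"
proof -
  define b where "b = (1 + x) / 2"
  have b: "x < b" "b < 1" using x by (auto simp: b_def)
  have "continuous_on {0..b} (hh q i)"
    using b by (intro continuous_on_subset[OF hh_cont[OF q]]) auto
  from integral_has_real_derivative[OF this, of x]
  have "((\<lambda>y. integral {0..y} (hh q i)) has_real_derivative hh q i x) (at x within {0..b})"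
    using x b by auto
  moreover have "at x within {0..b} = at x"
    using x b by (intro at_within_interior) auto
  ultimately show ?thesis unfolding FF_def[abs_def] by simp
qed

lemma pow_int: "((\<lambda>s. s ^ i) has_integral 1 / Suc i) {0..1::real}"
proof -
  have c: "continuous_on {0..1} (\<lambda>s::real. s ^ Suc i / Suc i)"
    by (intro continuous_intros) auto
  have d: "((\<lambda>s::real. s ^ Suc i / Suc i) has_vector_derivative x ^ i) (at x)" for x :: real
  proof -
    from DERIV_pow[of "Suc i" x] have "DERIV (\<lambda>s. s ^ Suc i) x :> real (Suc i) * x ^ i" by simp
    then have "DERIV (\<lambda>s. s ^ Suc i / Suc i) x :> real (Suc i) * x ^ i / Suc i" by (rule DERIV_cdivide)
    then have "((\<lambda>s::real. s ^ Suc i / Suc i) has_real_derivative x ^ i) (at x)"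
      by (simp del: of_nat_Suc)
    then show ?thesis by (simp add: has_real_derivative_iff_has_vector_derivative)
  qed
  show ?thesis
    using fundamental_theorem_of_calculus_interior[OF _ c d] by simp
qed

lemma FF1_pos: assumes q: "q \<ge> 1" shows "FF q i 1 > 0"
proof -
  have "((\<lambda>s. s ^ i) has_integral 1 / Suc i) {0<..<1::real}"
    using pow_int has_integral_Icc_iff_Ioo by blast
  moreover have "(hh q i has_integral FF q i 1) {0<..<1}"
    using hh_integrable[OF q] has_integral_Icc_iff_Ioo unfolding FF_def by blast
  moreover have "x ^ i \<le> hh q i x" if x: "x \<in> {0<..<1}" for x :: real
  proof -
    have "x ^ q < 1" using x q by (simp add: power_less_one_iff)
    moreover have "x ^ q \<ge> 0" using x by simp
    ultimately have s: "0 < sqrt (1 - x ^ q)" "sqrt (1 - x ^ q) \<le> 1" by auto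
    have "0 \<le> x ^ i" using x by simp
    then have "x ^ i * sqrt (1 - x ^ q) \<le> x ^ i" using s by (simp add: mult_left_le)
    then show ?thesis using s unfolding hh_def by (simp add: le_divide_eq)
  qed
  ultimately have "1 / Suc i \<le> FF q i 1" by (rule has_integral_le)
  moreover have "0 < 1 / real (Suc i)" by simp
  ultimately show ?thesis by linarith
qed

lemma path_ftc:
  assumes q: "q \<ge> 1" and ab: "a \<le> b" and rc: "continuous_on {a..b} r"
    and rr: "\<And>t. t \<in> {a..b} \<Longrightarrow> 0 \<le> r t \<and> r t \<le> 1"
    and rd: "\<And>t. t \<in> {a<..<b} \<Longrightarrow> (r has_real_derivative r' t) (at t) \<and> 0 < r t \<and> r t < 1"
  shows "((\<lambda>t. hh q i (r t) * r' t) has_integral (FF q i (r b) - FF q i (r a))) {a..b}"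
proof -
  have c: "continuous_on {a..b} (\<lambda>t. FF q i (r t))"
    by (rule continuous_on_compose2[OF FF_cont[OF q] rc]) (use rr in auto)
  have d: "((\<lambda>t. FF q i (r t)) has_vector_derivative hh q i (r t) * r' t) (at t)"
    if t: "t \<in> {a<..<b}" for t
  proof -
    have "((\<lambda>t. FF q i (r t)) has_real_derivative hh q i (r t) * r' t) (at t)"
      using rd[OF t] FF_deriv[OF q] by (intro DERIV_chain2) auto
    then show ?thesis by (simp add: has_real_derivative_iff_has_vector_derivative)
  qed
  show ?thesis
    using fundamental_theorem_of_calculus_interior[OF ab c d] by simp
qed

lemma FF0[simp]: "FF q i 0 = 0"
  by (simp add: FF_def)

lemma two_piece:
  fixes f :: "real \<Rightarrow> complex"
  assumes q: "q \<ge> 1"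
    and rac: "continuous_on {0..1/2} ra"
    and rar: "\<And>t. t \<in> {0..1/2} \<Longrightarrow> 0 \<le> ra t \<and> ra t \<le> 1"
    and rad: "\<And>t. t \<in> {0<..<1/2} \<Longrightarrow> (ra has_real_derivative ra' t) (at t) \<and> 0 < ra t \<and> ra t < 1"
    and rae: "ra 0 = 0" "ra (1/2) = 1"
    and rbc: "continuous_on {1/2..1} rb"
    and rbr: "\<And>t. t \<in> {1/2..1} \<Longrightarrow> 0 \<le> rb t \<and> rb t \<le> 1"
    and rbd: "\<And>t. t \<in> {1/2<..<1} \<Longrightarrow> (rb has_real_derivative rb' t) (at t) \<and> 0 < rb t \<and> rb t < 1"
    and rbe: "rb (1/2) = 1" "rb 1 = 0"
    and f1: "\<And>t. t \<in> {0<..<1/2} \<Longrightarrow> f t = c * of_real (hh q i (ra t) * ra' t)"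
    and f2: "\<And>t. t \<in> {1/2<..<1} \<Longrightarrow> f t = - c * of_real (hh q i (rb t) * rb' t)"
  shows "(f has_integral (2 * c * of_real (FF q i 1))) {0..1}"
proof -
  have i1: "((\<lambda>t. hh q i (ra t) * ra' t) has_integral FF q i 1) {0..1/2}"
    using path_ftc[OF q _ rac rar rad] rae by simp
  have i1': "(f has_integral (c * of_real (FF q i 1))) {0..1/2}"
  proof (rule has_integral_spike[of "{0, 1/2}"])
    show "((\<lambda>t. c * of_real (hh q i (ra t) * ra' t)) has_integral (c * of_real (FF q i 1))) {0..1/2}"
      by (rule has_integral_mult_right[OF has_integral_of_real[OF i1]])
  qed (use f1 in auto)
  have i2: "((\<lambda>t. hh q i (rb t) * rb' t) has_integral - FF q i 1) {1/2..1}"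
    using path_ftc[OF q _ rbc rbr rbd] rbe by simp
  have i2': "(f has_integral (c * of_real (FF q i 1))) {1/2..1}"
  proof (rule has_integral_spike[of "{1/2, 1}"])
    show "((\<lambda>t. - c * of_real (hh q i (rb t) * rb' t)) has_integral (c * of_real (FF q i 1))) {1/2..1}"
      using has_integral_mult_right[OF has_integral_of_real[OF i2], of "- c"] by simp
  qed (use f2 in auto)
  show ?thesis
    using has_integral_combine[OF _ _ i1' i2'] by (simp add: mult.assoc)
qed

lemma vd_at:
  assumes "t \<in> {0<..<1::real}" "(f has_vector_derivative D) (at t)"
  shows "vector_derivative f (at t within {0..1}) = D"
proof -
  have "at t within {0..1} = at t" using assms(1) by (intro at_within_interior) auto
  then show ?thesis using vector_derivative_at[OF assms(2)] by simp
qed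

lemma sqrt_pos_aux:
  assumes "q \<ge> 1" "0 < x" "x < (1::real)"
  shows "0 < sqrt (1 - x ^ q)"
proof -
  have "x ^ q < 1" using assms by (simp add: power_less_one_iff)
  then show ?thesis by simp
qed

lemma omega_gam:
  assumes q: "q \<ge> 1"
  shows "omega_int i (gam q k) = 2 * (- \<i> * (zeta q ^ k) ^ Suc i) * of_real (FF q i 1)"
proof -
  let ?c = "- \<i> * (zeta q ^ k) ^ Suc i"
  let ?f = "\<lambda>t. (fst (gam q k t)) ^ i / snd (gam q k t) * vector_derivative (\<lambda>s. fst (gam q k s)) (at t within {0..1})"
  have "(?f has_integral (2 * ?c * of_real (FF q i 1))) {0..1}"
  proof (rule two_piece[OF q, where ra = "\<lambda>t. 2 * t" and ra' = "\<lambda>t. 2" and rb = "\<lambda>t. 2 - 2 * t" and rb' = "\<lambda>t. - 2"])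
    fix t :: real assume t: "t \<in> {0<..<1/2}"
    have "((\<lambda>s. zeta q ^ k * of_real (2 * s)) has_vector_derivative zeta q ^ k * 2) (at t)"
      by (auto intro!: derivative_eq_intros)
    then have dv: "((\<lambda>s. fst (gam q k s)) has_vector_derivative zeta q ^ k * 2) (at t)"
      by (rule has_vector_derivative_transform_within_open[where S = "{..<1/2}"]) (use t in \<open>auto simp: gam_def\<close>)
    have vd: "vector_derivative (\<lambda>s. fst (gam q k s)) (at t within {0..1}) = zeta q ^ k * 2"
      by (rule vd_at[OF _ dv]) (use t in auto)
    have sp: "0 < sqrt (1 - (2 * t) ^ q)" using t sqrt_pos_aux[OF q, of "2 * t"] by auto
    show "?f t = ?c * of_real (hh q i (2 * t) * 2)"
      using t sp unfolding vd by (simp add: gam_def hh_def power_mult_distrib field_simps)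
  next
    fix t :: real assume t: "t \<in> {1/2<..<1}"
    have "((\<lambda>s. zeta q ^ k * of_real (2 - 2 * s)) has_vector_derivative zeta q ^ k * (- 2)) (at t)"
      by (auto intro!: derivative_eq_intros)
    then have dv: "((\<lambda>s. fst (gam q k s)) has_vector_derivative zeta q ^ k * (- 2)) (at t)"
      by (rule has_vector_derivative_transform_within_open[where S = "{1/2<..}"]) (use t in \<open>auto simp: gam_def\<close>)
    have vd: "vector_derivative (\<lambda>s. fst (gam q k s)) (at t within {0..1}) = zeta q ^ k * (- 2)"
      by (rule vd_at[OF _ dv]) (use t in auto)
    have sp: "0 < sqrt (1 - (2 - 2 * t) ^ q)" using t sqrt_pos_aux[OF q, of "2 - 2 * t"] by auto
    have g: "gam q k t = (zeta q ^ k * of_real (2 - 2 * t), - \<i> * of_real (sqrt (1 - (2 - 2 * t) ^ q)))"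
      using t by (simp add: gam_def)
    have e: "(zeta q ^ k * of_real (2 - 2 * t)) ^ i = (zeta q ^ k) ^ i * of_real ((2 - 2 * t) ^ i)"
      by (simp add: power_mult_distrib)
    show "?f t = - ?c * of_real (hh q i (2 - 2 * t) * (- 2))"
      using sp unfolding vd g fst_conv snd_conv e by (simp add: hh_def field_simps)
  qed (auto intro!: continuous_intros derivative_eq_intros)
  then show ?thesis unfolding omega_int_def by (rule integral_unique)
qed

definition rr :: "nat \<Rightarrow> real \<Rightarrow> real" where
  "rr q t = root q (4 * (t * (1 - t)))"

definition rr' :: "nat \<Rightarrow> real \<Rightarrow> real" where
  "rr' q t = inverse (real q * rr q t ^ (q - Suc 0)) * (4 - 8 * t)"

lemma sigma_pow: "(sigma q ^^ j) p = (fst p, zeta q ^ j * snd p)"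
  by (induction j arbitrary: p) (auto simp: sigma_def)

lemma zw_path: "fst ((to_zw q \<circ> (sigma q ^^ j) \<circ> I0 q) t) = zeta q ^ j * of_real (rr q t)"
  "snd ((to_zw q \<circ> (sigma q ^^ j) \<circ> I0 q) t) = - \<i> * (2 * of_real t - 1)"
  by (auto simp: sigma_pow to_zw_def I0_def rr_def real_root_mult)

lemma u_bounds: "t \<in> {0..1} \<Longrightarrow> 0 \<le> 4 * (t * (1 - t)) \<and> 4 * (t * (1 - t)) \<le> (1::real)"
proof -
  assume t: "t \<in> {0..1}"
  have "0 \<le> (2 * t - 1) ^ 2" by simp
  moreover have "t * t \<le> t" using t by (simp add: mult_left_le_one_le)
  ultimately show ?thesis using t by (auto simp: power2_eq_square algebra_simps)
qed

lemma u_bounds_strict: "t \<in> {0<..<1} \<Longrightarrow> t \<noteq> 1/2 \<Longrightarrow> 0 < 4 * (t * (1 - t)) \<and> 4 * (t * (1 - t)) < (1::real)"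
proof -
  assume t: "t \<in> {0<..<1}" "t \<noteq> 1/2"
  have "0 < (2 * t - 1) ^ 2" using t by simp
  then show ?thesis using t by (auto simp: power2_eq_square algebra_simps)
qed

lemma rr_range: "q \<ge> 1 \<Longrightarrow> t \<in> {0..1} \<Longrightarrow> 0 \<le> rr q t \<and> rr q t \<le> 1"
  using u_bounds[of t] by (auto simp: rr_def)

lemma rr_range_strict: "q \<ge> 1 \<Longrightarrow> t \<in> {0<..<1} \<Longrightarrow> t \<noteq> 1/2 \<Longrightarrow> 0 < rr q t \<and> rr q t < 1"
  using u_bounds_strict[of t] by (auto simp: rr_def)

lemma rr_deriv: "q \<ge> 1 \<Longrightarrow> t \<in> {0<..<1} \<Longrightarrow> t \<noteq> 1/2 \<Longrightarrow> (rr q has_real_derivative rr' q t) (at t)"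
proof -
  assume q: "q \<ge> 1" and t: "t \<in> {0<..<1}" "t \<noteq> 1/2"
  have u: "0 < 4 * (t * (1 - t))" using u_bounds_strict[OF t] by simp
  have d: "DERIV (\<lambda>s. 4 * (s * (1 - s))) t :> 4 - 8 * t"
    by (auto intro!: derivative_eq_intros simp: algebra_simps)
  show ?thesis
    unfolding rr_def[abs_def] rr'_def rr_def
    using DERIV_chain2[OF DERIV_real_root[of q, OF _ u] d] q by simp
qed

lemma rr_pow: "q \<ge> 1 \<Longrightarrow> t \<in> {0..1} \<Longrightarrow> sqrt (1 - rr q t ^ q) = \<bar>1 - 2 * t\<bar>"
proof -
  assume q: "q \<ge> 1" and t: "t \<in> {0..1}"
  have "rr q t ^ q = 4 * (t * (1 - t))" using u_bounds[OF t] q by (simp add: rr_def)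
  then have "1 - rr q t ^ q = (1 - 2 * t) ^ 2" by (simp add: power2_eq_square algebra_simps)
  then show ?thesis by simp
qed

lemma omega_c:
  assumes q: "q \<ge> 1"
  shows "omega_int i (to_zw q \<circ> (sigma q ^^ j) \<circ> I0 q) = 2 * (- \<i> * (zeta q ^ j) ^ Suc i) * of_real (FF q i 1)"
proof -
  let ?c = "- \<i> * (zeta q ^ j) ^ Suc i"
  let ?p = "to_zw q \<circ> (sigma q ^^ j) \<circ> I0 q"
  let ?f = "\<lambda>t. (fst (?p t)) ^ i / snd (?p t) * vector_derivative (\<lambda>s. fst (?p s)) (at t within {0..1})"
  have vd: "vector_derivative (\<lambda>s. zeta q ^ j * of_real (rr q s)) (at t within {0..1}) = zeta q ^ j * of_real (rr' q t)"
    if t: "t \<in> {0<..<1}" "t \<noteq> 1/2" for t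
  proof (rule vd_at[OF t(1)])
    have "((\<lambda>s. zeta q ^ j * of_real (rr q s)) has_vector_derivative zeta q ^ j * of_real (rr' q t)) (at t)"
      using rr_deriv[OF q t] by (auto intro!: derivative_eq_intros)
    then show "((\<lambda>s. zeta q ^ j * of_real (rr q s)) has_vector_derivative zeta q ^ j * of_real (rr' q t)) (at t)" .
  qed
  have e: "(zeta q ^ j * of_real (rr q t)) ^ i = (zeta q ^ j) ^ i * of_real ((rr q t) ^ i)" for t
    by (simp add: power_mult_distrib)
  have "(?f has_integral (2 * ?c * of_real (FF q i 1))) {0..1}"
  proof (rule two_piece[OF q, where ra = "rr q" and ra' = "rr' q" and rb = "rr q" and rb' = "rr' q"])
    fix t :: real assume t: "t \<in> {0<..<1/2}"
    then have t': "t \<in> {0<..<1}" "t \<noteq> 1/2" by auto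
    have s: "sqrt (1 - rr q t ^ q) = 1 - 2 * t" using rr_pow[OF q, of t] t by auto
    have w: "- \<i> * (2 * of_real t - 1) = \<i> * of_real (sqrt (1 - rr q t ^ q))"
      unfolding s by (simp add: algebra_simps)
    have sp: "0 < sqrt (1 - rr q t ^ q)" using rr_pow[OF q, of t] t by auto
    show "?f t = ?c * of_real (hh q i (rr q t) * rr' q t)"
      using sp unfolding zw_path vd[OF t'] w e by (simp add: hh_def field_simps)
  next
    fix t :: real assume t: "t \<in> {1/2<..<1}"
    then have t': "t \<in> {0<..<1}" "t \<noteq> 1/2" by auto
    have s: "sqrt (1 - rr q t ^ q) = 2 * t - 1" using rr_pow[OF q, of t] t by auto
    have w: "- \<i> * (2 * of_real t - 1) = - \<i> * of_real (sqrt (1 - rr q t ^ q))"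
      unfolding s by (simp add: algebra_simps)
    have sp: "0 < sqrt (1 - rr q t ^ q)" using rr_pow[OF q, of t] t by auto
    show "?f t = - ?c * of_real (hh q i (rr q t) * rr' q t)"
      using sp unfolding zw_path vd[OF t'] w e by (simp add: hh_def field_simps)
  next
    show "continuous_on {0..1/2} (rr q)" "continuous_on {1/2..1} (rr q)"
      unfolding rr_def[abs_def] by (auto intro!: continuous_intros)
  qed (use q rr_range rr_range_strict rr_deriv in \<open>auto simp: rr_def\<close>)
  then show ?thesis unfolding omega_int_def by (rule integral_unique)
qed

definition KK :: "nat \<Rightarrow> nat \<Rightarrow> complex" where
  "KK q i = 2 * (- \<i>) * of_real (FF q i 1)"

definition eta :: "nat \<Rightarrow> nat \<Rightarrow> complex" where
  "eta q i = zeta q ^ Suc i"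

lemma pow_swap: "(z ^ k) ^ Suc i = (z ^ Suc i) ^ k" for z :: complex
  by (metis power_mult mult.commute)

lemma omega_gam': "q \<ge> 1 \<Longrightarrow> omega_int i (gam q k) = KK q i * eta q i ^ k"
  unfolding omega_gam KK_def eta_def pow_swap by simp

lemma omega_c': "q \<ge> 1 \<Longrightarrow> omega_int i (to_zw q \<circ> (sigma q ^^ j) \<circ> I0 q) = KK q i * eta q i ^ j"
  unfolding omega_c KK_def eta_def pow_swap by simp

lemma omega_c0: "q \<ge> 1 \<Longrightarrow> omega_int i (to_zw q \<circ> I0 q) = KK q i"
  using omega_c'[of q i 0] by simp

lemma chain_nil[simp]: "chain_int i [] = 0"
  by (simp add: chain_int_def)

lemma chain_cons[simp]: "chain_int i ((n, \<gamma>) # cs) = of_int n * omega_int i \<gamma> + chain_int i cs"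
  by (simp add: chain_int_def)

lemma chain_append[simp]: "chain_int i (xs @ ys) = chain_int i xs + chain_int i ys"
  by (simp add: chain_int_def)

lemma chain_rev[simp]: "chain_int i (rev xs) = chain_int i xs"
  by (induction xs) (auto simp: chain_int_def)

lemma chain_scale: "chain_int i (map (\<lambda>(n, \<gamma>). (c * n, \<gamma>)) cs) = of_int c * chain_int i cs"
  by (induction cs) (auto simp: algebra_simps)

lemma chain_concat: "chain_int i (concat L) = sum_list (map (chain_int i) L)"
  by (induction L) auto

lemma sum_list_map_upt: "sum_list (map f [a..<b]) = sum f {a..<b}"
  by (simp add: sum_set_upt_conv_sum_list_nat[symmetric])

lemma chain_map_upt: "chain_int i (map (\<lambda>k. (c k, \<gamma> k)) xs) = sum_list (map (\<lambda>k. of_int (c k) * omega_int i (\<gamma> k)) xs)"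
  by (induction xs) auto

lemma chain_A: "q \<ge> 1 \<Longrightarrow> chain_int i (cycA q m) = KK q i * (eta q i ^ (2*m - 1) - eta q i ^ (2*m))"
  by (simp add: cycA_def omega_gam' algebra_simps)

lemma neg1_pow: "k < 2 * m \<Longrightarrow> (-1::complex) ^ (2 * m - 1 - k) = (-1) ^ (k + 1)"
proof -
  assume k: "k < 2 * m"
  have "even (2 * m - 1 - k) \<longleftrightarrow> even (k + 1)" using k by presburger
  then show ?thesis by (simp add: minus_one_power_iff)
qed

lemma neg1_pow': "k < 2 * m \<Longrightarrow> (-1::complex) ^ (2 * m - Suc k) = - ((-1) ^ k)"
  using neg1_pow[of k m] by simp

lemma chain_B: "q \<ge> 1 \<Longrightarrow> chain_int i (cycB q m) = KK q i * (\<Sum>k<2*m. (-1) ^ (k + 1) * eta q i ^ k)"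
proof -
  assume q: "q \<ge> 1"
  have "chain_int i (cycB q m) = chain_int i (map (\<lambda>k. ((-1) ^ (2*m - 1 - k), gam q k)) [0..<2*m])"
    unfolding cycB_def rev_map[symmetric] chain_rev ..
  also have "\<dots> = (\<Sum>k\<in>{0..<2*m}. of_int ((-1) ^ (2*m - 1 - k)) * omega_int i (gam q k))"
    unfolding chain_map_upt sum_list_map_upt ..
  also have "\<dots> = (\<Sum>k<2*m. KK q i * ((-1) ^ (k + 1) * eta q i ^ k))"
    by (rule sum.cong) (auto simp: omega_gam'[OF q] neg1_pow neg1_pow')
  finally show ?thesis by (simp add: sum_distrib_left)
qed

lemma chain_c: "q \<ge> 1 \<Longrightarrow> chain_int i (cyc_c q k) = KK q i * (1 - eta q i ^ k)"
  by (simp add: cyc_c_def omega_c0 omega_c' algebra_simps)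

lemma chain_cs: "q \<ge> 1 \<Longrightarrow> chain_int i (concat (map (\<lambda>k. map (\<lambda>(n, \<gamma>). ((-1) ^ (k - 1) * n, \<gamma>)) (cyc_c q k)) [1..<N]))
   = KK q i * (\<Sum>k<N. (-1) ^ (k - 1) * (1 - eta q i ^ k))"
proof -
  assume q: "q \<ge> 1"
  have "chain_int i (concat (map (\<lambda>k. map (\<lambda>(n, \<gamma>). ((-1) ^ (k - 1) * n, \<gamma>)) (cyc_c q k)) [1..<N]))
     = (\<Sum>k\<in>{1..<N}. KK q i * ((-1) ^ (k - 1) * (1 - eta q i ^ k)))"
    unfolding chain_concat map_map o_def chain_scale sum_list_map_upt
    by (rule sum.cong) (auto simp: chain_c[OF q])
  also have "\<dots> = (\<Sum>k<N. KK q i * ((-1) ^ (k - 1) * (1 - eta q i ^ k)))"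
  proof (cases N)
    case (Suc n)
    then show ?thesis
      by (simp add: atLeast0LessThan[symmetric] sum.atLeast_Suc_lessThan)
  qed simp
  finally show ?thesis by (simp add: sum_distrib_left)
qed

lemma L1: "(\<Sum>k<2*m. (-1) ^ (k - 1) * (1 - x ^ k)) = - (\<Sum>k<2*m. (-1) ^ (k + 1) * x ^ k :: complex)"
proof (induction m)
  case (Suc m)
  have e: "2 * Suc m = Suc (Suc (2 * m))" by simp
  show ?case unfolding e sum.lessThan_Suc using Suc
    by (cases m) (simp_all add: algebra_simps)
qed simp

lemma chain_a: "q \<ge> 1 \<Longrightarrow> chain_int i (cyca q m) = - chain_int i (cycB q m)"
proof -
  assume q: "q \<ge> 1"
  show ?thesis unfolding cyca_def chain_cs[OF q] chain_B[OF q] L1 by simp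
qed

lemma chain_b: "q \<ge> 1 \<Longrightarrow> m \<ge> 1 \<Longrightarrow> chain_int i (cycb q m) = chain_int i (cycA q m) - chain_int i (cycB q m)"
proof -
  assume q: "q \<ge> 1" and m: "m \<ge> 1"
  let ?f = "\<lambda>k. (-1) ^ (k - 1) * (1 - eta q i ^ k)"
  have e: "2 * m = Suc (2 * m - 1)" using m by simp
  have "(\<Sum>k<2*m. ?f k) = (\<Sum>k<2*m - 1. ?f k) + ?f (2*m - 1)"
    by (subst e, subst sum.lessThan_Suc) simp
  moreover have "?f (2*m - 1) = 1 - eta q i ^ (2*m - 1)"
  proof -
    have "2 * m - 1 - 1 = 2 * (m - 1)" by simp
    then show ?thesis by (simp add: power_mult)
  qed
  ultimately have s: "(\<Sum>k<2*m - 1. ?f k) = - (\<Sum>k<2*m. (-1) ^ (k + 1) * eta q i ^ k) - 1 + eta q i ^ (2*m - 1)"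
    using L1[where m=m and x="eta q i"] by (simp add: algebra_simps)
  show ?thesis
    unfolding cycb_def chain_append chain_cs[OF q] chain_c[OF q] chain_A[OF q] chain_B[OF q] s
    by (simp add: algebra_simps)
qed

lemma zeta_pow: "zeta q ^ n = exp (of_nat n * (2 * pi * \<i> / of_nat q))"
  unfolding zeta_def by (rule exp_of_nat_mult[symmetric])

lemma zeta_nz: "zeta q \<noteq> 0"
  by (simp add: zeta_def)

lemma zeta_pow_ne_1:
  assumes q: "q > 0" and n: "0 < n" "n < q"
  shows "zeta q ^ n \<noteq> 1"
proof
  assume "zeta q ^ n = 1"
  then obtain k :: int where k: "Im (of_nat n * (2 * pi * \<i> / of_nat q)) = of_int (2 * k) * pi"
    unfolding zeta_pow exp_eq_1 by blast
  have "Im (of_nat n * (2 * pi * \<i> / of_nat q)) = 2 * pi * real n / real q"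
    using q by (simp add: Im_divide power2_eq_square)
  with k have "2 * pi * real n / real q = 2 * real_of_int k * pi" by simp
  then have "real n = real_of_int k * real q" using q by (simp add: field_simps)
  then have e: "int n = k * int q" by (metis of_int_eq_iff of_int_mult of_int_of_nat_eq)
  show False
  proof (cases "k \<le> 0")
    case True
    then have "k * int q \<le> 0" using q by (simp add: mult_nonpos_nonneg)
    then show False using e n by linarith
  next
    case False
    then have "k * int q \<ge> int q" using q by simp
    then show False using e n by linarith
  qed
qed

lemma zeta_pow_inj:
  assumes q: "q > 0" and ab: "a < q" "b < q" and e: "zeta q ^ a = zeta q ^ b"
  shows "a = b"
proof (rule ccontr)
  assume "a \<noteq> b"
  then consider "a < b" | "b < a" by linarith
  then show False
  proof cases
    case 1
    then have "zeta q ^ b = zeta q ^ a * zeta q ^ (b - a)" by (simp add: power_add[symmetric])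
    then have "zeta q ^ (b - a) = 1" using e zeta_nz by simp
    then show False using zeta_pow_ne_1[OF q, of "b - a"] 1 ab by auto
  next
    case 2
    then have "zeta q ^ a = zeta q ^ b * zeta q ^ (a - b)" by (simp add: power_add[symmetric])
    then have "zeta q ^ (a - b) = 1" using e zeta_nz by simp
    then show False using zeta_pow_ne_1[OF q, of "a - b"] 2 ab by auto
  qed
qed

lemma poly_vanish:
  fixes c :: "nat \<Rightarrow> complex"
  assumes j: "j \<le> n" and S: "finite S" "card S > n" and z: "\<And>x. x \<in> S \<Longrightarrow> (\<Sum>j\<le>n. c j * x ^ j) = 0"
  shows "c j = 0"
proof (cases "j \<le> n")
  case True
  define p where "p = (\<Sum>j\<le>n. monom (c j) j)"
  have pe: "poly p x = (\<Sum>j\<le>n. c j * x ^ j)" for x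
    unfolding p_def by (simp add: poly_sum poly_monom)
  have cp: "coeff p k = (if k \<le> n then c k else 0)" for k
    unfolding p_def by (simp add: coeff_sum)
  have "p = 0"
  proof (rule ccontr)
    assume "p \<noteq> 0"
    have dg: "degree p \<le> n" by (rule degree_le) (simp add: cp)
    have "S \<subseteq> {x. poly p x = 0}" using z pe by auto
    then have "card S \<le> card {x. poly p x = 0}"
      by (rule card_mono[OF poly_roots_finite[OF \<open>p \<noteq> 0\<close>]])
    also have "\<dots> \<le> degree p" by (rule card_poly_roots_bound) fact
    finally show False using dg S by linarith
  qed
  then show ?thesis using cp[of j] True by simp
qed (use j in simp)

lemma Q_id: "(1 + x) * (\<Sum>k<2*m. (-1) ^ (k + 1) * x ^ k) = x ^ (2 * m) - (1::complex)"
proof (induction m)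
  case (Suc m)
  have e: "2 * Suc m = Suc (Suc (2 * m))" by simp
  have "(1 + x) * (\<Sum>k<2*Suc m. (-1) ^ (k + 1) * x ^ k)
      = (1 + x) * (\<Sum>k<2*m. (-1) ^ (k + 1) * x ^ k) + (1 + x) * (x ^ (2*m + 1) - x ^ (2 * m))"
    unfolding e sum.lessThan_Suc by (simp add: algebra_simps)
  also have "\<dots> = x ^ (2 * Suc m) - 1"
    unfolding Suc by (simp add: algebra_simps power2_eq_square)
  finally show ?case .
qed simp

context
  fixes g q :: nat
  assumes g: "g \<ge> 1" and qg: "q = 2 * g + 1"
begin

lemma q1: "q \<ge> 1" using qg by simp

lemma KK_nz: "KK q i \<noteq> 0"
  using FF1_pos[OF q1, of i] by (simp add: KK_def)

lemma eta_nz: "eta q i \<noteq> 0"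
  by (simp add: eta_def zeta_nz)

lemma eta_ne1: "i < g \<Longrightarrow> eta q i \<noteq> 1"
  unfolding eta_def using qg by (intro zeta_pow_ne_1) auto

lemma eta2: "eta q i ^ 2 = zeta q ^ (2 * Suc i)"
  unfolding eta_def by (metis power_mult mult.commute)

lemma eta2_ne1: "i < g \<Longrightarrow> eta q i ^ 2 \<noteq> 1"
  unfolding eta2 using qg by (intro zeta_pow_ne_1) auto

lemma eta2_inj: "inj_on (\<lambda>i. eta q i ^ 2) {..<g}"
  unfolding eta2 inj_on_def
proof (intro ballI impI)
  fix x y assume "x \<in> {..<g}" "y \<in> {..<g}" "zeta q ^ (2 * Suc x) = zeta q ^ (2 * Suc y)"
  then have "2 * Suc x = 2 * Suc y" using qg by (intro zeta_pow_inj[of q]) auto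
  then show "x = y" by simp
qed

lemma card_roots: "card ((\<lambda>i. eta q i ^ 2) ` {..<g}) = g"
  using card_image[OF eta2_inj] by simp

lemma MA_entry: "i < g \<Longrightarrow> j < g \<Longrightarrow> period_mat g (cycA q) $$ (i, j)
   = KK q i * eta q i * (1 - eta q i) * (eta q i ^ 2) ^ j"
  by (simp add: period_mat_def chain_A[OF q1] power_mult[symmetric] algebra_simps)

lemma MB_entry: "i < g \<Longrightarrow> j < g \<Longrightarrow> period_mat g (cycB q) $$ (i, j)
   = KK q i * (\<Sum>k<2*Suc j. (-1) ^ (k + 1) * eta q i ^ k)"
  by (simp add: period_mat_def chain_B[OF q1])

lemma mult_vec_entry: "A \<in> carrier_mat g g \<Longrightarrow> v \<in> carrier_vec g \<Longrightarrow> i < g \<Longrightarrow>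
   (A *\<^sub>v v) $ i = (\<Sum>j<g. A $$ (i, j) * v $ j)"
  by (auto simp: scalar_prod_def atLeast0LessThan)

lemma MA_carrier: "period_mat g \<alpha> \<in> carrier_mat g g"
  by (simp add: period_mat_def)

lemma det_MA: "Determinant.det (period_mat g (cycA q)) \<noteq> 0"
proof
  assume "Determinant.det (period_mat g (cycA q)) = 0"
  then obtain v where v: "v \<in> carrier_vec g" "v \<noteq> 0\<^sub>v g" "period_mat g (cycA q) *\<^sub>v v = 0\<^sub>v g"
    using det_0_iff_vec_prod_zero[OF MA_carrier] by blast
  have z: "(\<Sum>j\<le>g - 1. v $ j * x ^ j) = 0" if x: "x \<in> (\<lambda>i. eta q i ^ 2) ` {..<g}" for x
  proof -
    obtain i where i: "i < g" "x = eta q i ^ 2" using x by auto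
    have "0 = (period_mat g (cycA q) *\<^sub>v v) $ i" using v(3) i by simp
    also have "\<dots> = (\<Sum>j<g. (KK q i * eta q i * (1 - eta q i)) * (v $ j * x ^ j))"
      unfolding mult_vec_entry[OF MA_carrier v(1) i(1)]
      by (rule sum.cong[OF refl]) (simp add: MA_entry i mult_ac)
    also have "\<dots> = (KK q i * eta q i * (1 - eta q i)) * (\<Sum>j<g. v $ j * x ^ j)"
      by (simp add: sum_distrib_left)
    finally have "(\<Sum>j<g. v $ j * x ^ j) = 0"
      using KK_nz eta_nz eta_ne1[OF i(1)] by simp
    moreover have "{..g - 1} = {..<g}" using g by auto
    ultimately show ?thesis by simp
  qed
  have "v $ j = 0" if j: "j < g" for j
    by (rule poly_vanish[OF _ _ _ z]) (use j g card_roots in auto)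
  then have "v = 0\<^sub>v g" using v(1) by auto
  then show False using v(2) by simp
qed

lemma det_MB: "Determinant.det (period_mat g (cycB q)) \<noteq> 0"
proof
  assume "Determinant.det (period_mat g (cycB q)) = 0"
  then obtain v where v: "v \<in> carrier_vec g" "v \<noteq> 0\<^sub>v g" "period_mat g (cycB q) *\<^sub>v v = 0\<^sub>v g"
    using det_0_iff_vec_prod_zero[OF MA_carrier] by blast
  define c where "c = (\<lambda>j. case j of 0 \<Rightarrow> - (\<Sum>k<g. v $ k) | Suc k \<Rightarrow> v $ k)"
  have ce: "(\<Sum>j\<le>g. c j * x ^ j) = (\<Sum>k<g. v $ k * (x ^ Suc k - 1))" for x
  proof -
    have "(\<Sum>j\<le>g. c j * x ^ j) = (\<Sum>j<Suc g. c j * x ^ j)" by (simp add: lessThan_Suc_atMost)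
    also have "\<dots> = c 0 + (\<Sum>k<g. v $ k * x ^ Suc k)"
      unfolding sum.lessThan_Suc_shift by (simp add: c_def)
    finally show ?thesis by (simp add: c_def algebra_simps sum_subtractf sum_distrib_left)
  qed
  have z: "(\<Sum>j\<le>g. c j * x ^ j) = 0" if x: "x \<in> insert 1 ((\<lambda>i. eta q i ^ 2) ` {..<g})" for x
  proof (cases "x = 1")
    case True then show ?thesis unfolding ce by simp
  next
    case False
    then obtain i where i: "i < g" "x = eta q i ^ 2" using x by auto
    have "0 = (1 + eta q i) * (period_mat g (cycB q) *\<^sub>v v) $ i" using v(3) i by simp
    also have "\<dots> = KK q i * (\<Sum>j<g. v $ j * ((1 + eta q i) * (\<Sum>k<2*Suc j. (-1) ^ (k + 1) * eta q i ^ k)))"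
      unfolding mult_vec_entry[OF MA_carrier v(1) i(1)]
      by (simp add: MB_entry i sum_distrib_left algebra_simps)
    also have "\<dots> = KK q i * (\<Sum>j<g. v $ j * (x ^ Suc j - 1))"
      unfolding Q_id i(2) by (simp add: power_mult power2_eq_square mult.assoc)
    finally show ?thesis using KK_nz unfolding ce by simp
  qed
  have cardS: "card (insert 1 ((\<lambda>i. eta q i ^ 2) ` {..<g})) = Suc g"
    using card_roots eta2_ne1 by (subst card_insert_disjoint) auto
  have "v $ j = 0" if j: "j < g" for j
  proof -
    have "c (Suc j) = 0"
      by (rule poly_vanish[where S = "insert 1 ((\<lambda>i. eta q i ^ 2) ` {..<g})", OF _ _ _ z]) (use j cardS in auto)
    then show ?thesis by (simp add: c_def)
  qed
  then have "v = 0\<^sub>v g" using v(1) by auto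
  then show False using v(2) by simp
qed

end

lemma mat_inv_unique:
  fixes A B :: "complex mat"
  assumes A: "A \<in> carrier_mat n n" and B: "B \<in> carrier_mat n n" and AB: "A * B = 1\<^sub>m n"
  shows "mat_inv A = B" "B * A = 1\<^sub>m n"
proof -
  have "Determinant.det A * Determinant.det B = 1"
    using arg_cong[OF AB, of Determinant.det] det_mult[OF A B] by simp
  then have "Determinant.det A \<noteq> 0" by auto
  from det_non_zero_imp_unit[OF A this, where b = "()"] have U: "A \<in> Units (ring_mat TYPE(complex) n ())" .
  obtain C where C: "mat_inverse A = Some C"
    using mat_inverse(1)[OF A, where b = "()"] U by (cases "mat_inverse A") auto
  from mat_inverse(2)[OF A C] have CA: "C * A = 1\<^sub>m n" and Cc: "C \<in> carrier_mat n n" by auto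
  have "C = C * (A * B)" using Cc by (simp add: AB)
  also have "\<dots> = (C * A) * B" using Cc A B by simp
  also have "\<dots> = B" using B by (simp add: CA)
  finally have CB: "C = B" .
  show "mat_inv A = B" unfolding mat_inv_def C CB by simp
  show "B * A = 1\<^sub>m n" using CA CB by simp
qed

lemma mat_inv_props:
  fixes A :: "complex mat"
  assumes A: "A \<in> carrier_mat n n" and d: "Determinant.det A \<noteq> 0"
  shows "mat_inv A \<in> carrier_mat n n" "A * mat_inv A = 1\<^sub>m n" "mat_inv A * A = 1\<^sub>m n"
proof -
  from det_non_zero_imp_unit[OF A d, where b = "()"] have U: "A \<in> Units (ring_mat TYPE(complex) n ())" .
  obtain C where C: "mat_inverse A = Some C"
    using mat_inverse(1)[OF A, where b = "()"] U by (cases "mat_inverse A") auto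
  from mat_inverse(2)[OF A C] show "mat_inv A \<in> carrier_mat n n" "A * mat_inv A = 1\<^sub>m n" "mat_inv A * A = 1\<^sub>m n"
    unfolding mat_inv_def C by auto
qed

lemma final_algebra:
  fixes MA MB :: "complex mat"
  assumes A: "MA \<in> carrier_mat n n" and B: "MB \<in> carrier_mat n n"
    and dA: "Determinant.det MA \<noteq> 0" and dB: "Determinant.det MB \<noteq> 0"
  shows "invertible_mat (mat_inv MA * MB) \<and>
         mat_inv (- MB) * (MA - MB) = - mat_inv (mat_inv MA * MB) + 1\<^sub>m n"
proof -
  note iA = mat_inv_props[OF A dA]
  note iB = mat_inv_props[OF B dB]
  let ?iA = "mat_inv MA" and ?iB = "mat_inv MB"
  let ?T = "?iA * MB" and ?S = "?iB * MA"
  have Tc: "?T \<in> carrier_mat n n" using iA(1) B by simp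
  have Sc: "?S \<in> carrier_mat n n" using iB(1) A by simp
  have TS: "?T * ?S = 1\<^sub>m n"
  proof -
    have "?T * ?S = ?iA * (MB * (?iB * MA))" by (rule assoc_mult_mat[OF iA(1) B Sc])
    also have "MB * (?iB * MA) = (MB * ?iB) * MA" using iA(1) B iB(1) A by simp
    also have "\<dots> = MA" using iB(2) A by simp
    finally show ?thesis using iA(3) by simp
  qed
  note u = mat_inv_unique[OF Tc Sc TS]
  have inv: "invertible_mat ?T"
    unfolding invertible_mat_def inverts_mat_def
  proof (intro conjI exI)
    show "square_mat ?T" using iA(1) B by simp
    show "?T * ?S = 1\<^sub>m (dim_row ?T)" using iA(1) TS by simp
    show "?S * ?T = 1\<^sub>m (dim_row ?S)" using iB(1) u(2) by simp
  qed
  have nB: "(- MB) * (- ?iB) = 1\<^sub>m n" using iB B by simp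
  have niB: "mat_inv (- MB) = - ?iB"
    by (rule mat_inv_unique(1)[OF _ _ nB]) (use B iB(1) in auto)
  have "mat_inv (- MB) * (MA - MB) = - (?iB * (MA - MB))"
    unfolding niB by (rule uminus_mult_left_mat) (use iB(1) A B in simp)
  also have "?iB * (MA - MB) = ?S - ?iB * MB"
    by (rule mult_minus_distrib_mat[OF iB(1) A B])
  also have "\<dots> = ?S - 1\<^sub>m n" using iB(3) by simp
  also have "- (?S - 1\<^sub>m n) = - ?S + 1\<^sub>m n"
  proof -
    have d: "dim_row ?S = n" "dim_col ?S = n" using Sc by auto
    show ?thesis by (rule eq_matI) (use d in auto)
  qed
  finally show ?thesis using inv u(1) by simp
qed

theorem mainTheorem10:
  fixes g q :: nat
  assumes "g \<ge> 2" and "q = 2 * g + 1"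
  shows "invertible_mat (period_matrix g (cycA q) (cycB q)) \<and>
         period_matrix g (cyca q) (cycb q)
           = - mat_inv (period_matrix g (cycA q) (cycB q)) + 1\<^sub>m g"
proof -
  have g1: "g \<ge> 1" using assms(1) by simp
  have q: "q \<ge> 1" using assms(2) by simp
  have ea: "period_mat g (cyca q) = - period_mat g (cycB q)"
    by (rule eq_matI) (auto simp: period_mat_def chain_a[OF q])
  have eb: "period_mat g (cycb q) = period_mat g (cycA q) - period_mat g (cycB q)"
    by (rule eq_matI) (auto simp: period_mat_def chain_b[OF q])
  show ?thesis
    unfolding period_matrix_def ea eb
    by (rule final_algebra[OF MA_carrier[OF g1 assms(2)] MA_carrier[OF g1 assms(2)] det_MA[OF g1 assms(2)] det_MB[OF g1 assms(2)]])
qed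

end
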